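(* Let $p\colon(0,\infty)\to\mathbb{R}$ be smooth with $p'>0$, $A(\rho)=\rho^{-1}\sqrt{p'(\rho)}$, and let $\alpha_0,\alpha_1,\alpha_2,\alpha_3$ be real constants with $\alpha_2\neq0$. Let $G$ be an antiderivative of $\rho\mapsto A(\rho)^2(\rho+\alpha_3)$ on an interval $I\subset(0,\infty)$ not containing $-\alpha_3$. For $(\rho,t)\in I\times\mathbb{R}$ define $$U(\rho,t)=\frac{\alpha_2\rho t+\alpha_1\rho+\alpha_0}{\rho+\alpha_3},$$ $$g(\rho,t)=-\frac{G(\rho)}{\alpha_2}+\frac{\alpha_2^2t^2\rho(\rho+2\alpha_3)+2t\alpha_2\bigl(\alpha_3(\alpha_0+2\alpha_1\rho)+\alpha_1\rho^2\bigr)-(\alpha_0-\alpha_1\alpha_3)^2}{2\alpha_2(\rho+\alpha_3)^2}.$$ Then the surface $$N=\{(t,x,u,\rho)=(t,\,g(\rho,t),\,U(\rho,t),\,\rho):(\rho,t)\in I\times\mathbb{R}\}\subset E$$ is a multivalued solution of the system $\rho_t+(\rho u)_x=0$, $u_t+uu_x+\frac{p'(\rho)}{\rho}\rho_x=0$, i.e. $\omega_1|_N=\omega_2|_N=0$. Equivalently, the density is given implicitly by $x=g(\rho,t)$ and the velocity by $u=\frac{\alpha_2\rho t+\alpha_1\rho+\alpha_0}{\rho+\alpha_3}$.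
   Context: $E$ is the zero-jet space with coordinates $(t,x,u,\rho)$, $\rho>0$, and $\omega_1=\rho\,dt\wedge du+u\,dt\wedge d\rho-dx\wedge d\rho$, $\omega_2=u\,dt\wedge du+\frac{p'(\rho)}{\rho}dt\wedge d\rho-dx\wedge du$. A 2-dimensional submanifold $N\subset E$ is called a multivalued solution of the system if $\omega_1|_N=\omega_2|_N=0$; where $N$ projects diffeomorphically onto the $(t,x)$-plane it is the graph of a classical solution $(u(t,x),\rho(t,x))$. *)

theory Defs
  imports "HOL-Analysis.Analysis"
begin

text \<open>The 2-forms omega_1, omega_2 evaluated at a point P
  on a pair of tangent vectors a, b, using (dy_i wedge dy_j)(a,b) = a_i b_j - a_j b_i.
  The parameter pd stands for p'.\<close>

definition omega1 :: "real\<times>real\<times>real\<times>real \<Rightarrow> real\<times>real\<times>real\<times>real \<Rightarrow> real\<times>real\<times>real\<times>real \<Rightarrow> real" where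
  "omega1 P a b =
     (case P of (t, x, u, r) \<Rightarrow> case a of (a_t, ax, au, ar) \<Rightarrow> case b of (bt, bx, bu, br) \<Rightarrow>
        r * (a_t * bu - au * bt) + u * (a_t * br - ar * bt) - (ax * br - ar * bx))"

definition omega2 :: "(real \<Rightarrow> real) \<Rightarrow> real\<times>real\<times>real\<times>real \<Rightarrow> real\<times>real\<times>real\<times>real \<Rightarrow> real\<times>real\<times>real\<times>real \<Rightarrow> real" where
  "omega2 pd P a b =
     (case P of (t, x, u, r) \<Rightarrow> case a of (a_t, ax, au, ar) \<Rightarrow> case b of (bt, bx, bu, br) \<Rightarrow>
        u * (a_t * bu - au * bt) + (pd r / r) * (a_t * br - ar * bt) - (ax * bu - au * bx))"

text \<open>A surface N = phi ` D, given by a parametrization phi of an open parameter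
  domain D in R^2, is a 2-dimensional (embedded) submanifold of E that is a multivalued
  solution: phi is a differentiable injective immersion, homeomorphic onto its image,
  and both 2-forms vanish on every tangent plane of N (omega_i restricted to N is 0).\<close>

definition multivalued_solution ::
  "(real \<Rightarrow> real) \<Rightarrow> (real\<times>real \<Rightarrow> real\<times>real\<times>real\<times>real) \<Rightarrow> (real\<times>real) set \<Rightarrow> bool" where
  "multivalued_solution pd phi D \<longleftrightarrow>
     open D \<and> inj_on phi D \<and> continuous_on (phi ` D) (inv_into D phi) \<and>
     (\<forall>z\<in>D. \<exists>phi'. (phi has_derivative phi') (at z) \<and> inj phi' \<and>
        (\<forall>v w. omega1 (phi z) (phi' v) (phi' w) = 0 \<and> omega2 pd (phi z) (phi' v) (phi' w) = 0))"

definition Ufun :: "real \<Rightarrow> real \<Rightarrow> real \<Rightarrow> real \<Rightarrow> real \<Rightarrow> real \<Rightarrow> real" where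
  "Ufun a0 a1 a2 a3 r t = (a2 * r * t + a1 * r + a0) / (r + a3)"

definition gfun :: "(real \<Rightarrow> real) \<Rightarrow> real \<Rightarrow> real \<Rightarrow> real \<Rightarrow> real \<Rightarrow> real \<Rightarrow> real \<Rightarrow> real" where
  "gfun G a0 a1 a2 a3 r t =
     - G r / a2 +
     (a2^2 * t^2 * r * (r + 2 * a3) + 2 * t * a2 * (a3 * (a0 + 2 * a1 * r) + a1 * r^2)
        - (a0 - a1 * a3)^2) / (2 * a2 * (r + a3)^2)"

end

theory Submission
  imports Defs
begin

lemma omega_bilin:
  fixes ar ag au at bg bu :: real
  assumes "omega1 P (0,ag,au,1) (1,bg,bu,0) = 0" "omega2 pd P (0,ag,au,1) (1,bg,bu,0) = 0"
  shows "omega1 P (v2, ag* v1+bg* v2, au* v1+bu* v2, v1) (w2, ag* w1+bg* w2, au* w1+bu* w2, w1) = 0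
       \<and> omega2 pd P (v2, ag* v1+bg* v2, au* v1+bu* v2, v1) (w2, ag* w1+bg* w2, au* w1+bu* w2, w1) = 0"
proof -
  obtain t x u r where P: "P = (t,x,u,r)" by (cases P) auto
  have e1: "r * (0 * bu - au * 1) + u * (0 * 0 - 1 * 1) - (ag * 0 - 1 * bg) = 0"
    using assms(1) by (simp add: omega1_def P)
  have e2: "u * (0 * bu - au * 1) + (pd r / r) * (0 * 0 - 1 * 1) - (ag * bu - au * bg) = 0"
    using assms(2) by (simp add: omega2_def P)
  have "omega1 P (v2, ag* v1+bg* v2, au* v1+bu* v2, v1) (w2, ag* w1+bg* w2, au* w1+bu* w2, w1)
     = (v1* w2 - v2* w1) * (r * (0 * bu - au * 1) + u * (0 * 0 - 1 * 1) - (ag * 0 - 1 * bg))"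
    by (simp add: omega1_def P algebra_simps)
  moreover have "omega2 pd P (v2, ag* v1+bg* v2, au* v1+bu* v2, v1) (w2, ag* w1+bg* w2, au* w1+bu* w2, w1)
     = (v1* w2 - v2* w1) * (u * (0 * bu - au * 1) + (pd r / r) * (0 * 0 - 1 * 1) - (ag * bu - au * bg))"
    by (simp add: omega2_def P algebra_simps)
  ultimately show ?thesis using e1 e2 by simp
qed

theorem mainTheorem3:
  fixes p pd :: "real \<Rightarrow> real" and G :: "real \<Rightarrow> real"
    and a0 a1 a2 a3 :: real and I :: "real set"
  assumes smooth: "\<exists>D :: nat \<Rightarrow> real \<Rightarrow> real. D 0 = p \<and> D 1 = pd \<and>
             (\<forall>k. \<forall>r>0. (D k has_real_derivative D (Suc k) r) (at r))"
    and pd_pos: "\<forall>r>0. pd r > 0"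
    and a2: "a2 \<noteq> 0"
    and I_int: "is_interval I" and I_open: "open I" and I_ne: "I \<noteq> {}"
    and I_pos: "I \<subseteq> {0<..}" and I_a3: "- a3 \<notin> I"
    and G_anti: "\<forall>r\<in>I. (G has_real_derivative (sqrt (pd r) / r)^2 * (r + a3)) (at r)"
  shows "multivalued_solution pd
           (\<lambda>(r, t). (t, gfun G a0 a1 a2 a3 r t, Ufun a0 a1 a2 a3 r t, r)) (I \<times> UNIV)"
proof -
  let ?phi = "\<lambda>(r, t). (t, gfun G a0 a1 a2 a3 r t, Ufun a0 a1 a2 a3 r t, r)"
  have phi_eq: "?phi = (\<lambda>z. (snd z, gfun G a0 a1 a2 a3 (fst z) (snd z), Ufun a0 a1 a2 a3 (fst z) (snd z), fst z))"
    by (auto simp: fun_eq_iff)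
  have inv: "inv_into (I \<times> UNIV) ?phi y = (snd (snd (snd y)), fst y)" if "y \<in> ?phi ` (I \<times> UNIV)" for y
    using that by (auto intro!: inv_into_f_eq simp: inj_on_def)
  have cont: "continuous_on (?phi ` (I \<times> UNIV)) (inv_into (I \<times> UNIV) ?phi)"
    by (rule continuous_on_cong[THEN iffD1, OF refl _ continuous_on_Pair[OF continuous_on_compose2[OF continuous_on_snd continuous_on_compose2[OF continuous_on_snd continuous_on_snd]] continuous_on_fst]])
       (use inv in \<open>auto\<close>)
  have deriv: "\<exists>phi'. (?phi has_derivative phi') (at z) \<and> inj phi' \<and>
        (\<forall>v w. omega1 (?phi z) (phi' v) (phi' w) = 0 \<and> omega2 pd (?phi z) (phi' v) (phi' w) = 0)"
    if z: "z \<in> I \<times> UNIV" for z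
  proof -
    obtain r t where zrt: "z = (r,t)" by (cases z)
    have rI: "r \<in> I" using z zrt by auto
    have rpos: "r > 0" using rI I_pos by auto
    have d: "r + a3 \<noteq> 0" using rI I_a3 by (metis add.commute add_eq_0_iff2 minus_unique) 
    have d': "a3 + r \<noteq> 0" using d by (simp add: add.commute)
    obtain s where s0: "s \<noteq> 0" and r_eq: "r = s - a3" using d by (intro that[of "r + a3"]) auto
    define Gp where "Gp = (sqrt (pd r) / r)^2 * (r + a3)"
    have Gp: "Gp = pd r / r^2 * (r + a3)" using pd_pos rpos
      by (simp add: Gp_def power_divide less_imp_le)
    have GD: "(G has_real_derivative Gp) (at r)" using G_anti rI Gp_def by auto
    define N where "N = a2^2 * t^2 * r * (r + 2 * a3) + 2 * t * a2 * (a3 * (a0 + 2 * a1 * r) + a1 * r^2) - (a0 - a1 * a3)^2"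
    define Nr where "Nr = 2 * (r + a3) * (a2^2 * t^2 + 2 * t * a2 * a1)"
    define gr where "gr = - Gp / a2 + (Nr * (r + a3) - 2 * N) / (2 * a2 * (r + a3)^3)"
    define gt where "gt = (a2 * t * r * (r + 2 * a3) + a0 * a3 + 2 * a1 * a3 * r + a1 * r^2) / (r + a3)^2"
    define Ur where "Ur = (a2 * t * a3 + a1 * a3 - a0) / (r + a3)^2"
    define Ut where "Ut = a2 * r / (r + a3)"
    define phi' where "phi' = (\<lambda>(v1::real, v2::real). (v2, gr* v1+gt* v2, Ur* v1+Ut* v2, v1))"
    have hG: "((\<lambda>x. G (fst x)) has_derivative (\<lambda>h. fst h * Gp)) (at (r,t))"
      by (rule DERIV_compose_FDERIV[OF _ has_derivative_fst[OF has_derivative_ident]]) (use GD in simp)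
    have hd: "(?phi has_derivative phi') (at z)"
      unfolding phi_eq gfun_def Ufun_def zrt
      apply (rule hG derivative_eq_intros refl | simp add: d a2)+
      apply (simp add: phi'_def fun_eq_iff gr_def gt_def Ur_def Ut_def N_def Nr_def)
      apply (simp only: r_eq)
      apply (simp add: field_simps s0 a2)
      apply algebra
      done
    have inj: "inj phi'" unfolding phi'_def by (auto simp: inj_def)
    have o1: "omega1 (?phi z) (0,gr,Ur,1) (1,gt,Ut,0) = 0"
      unfolding omega1_def zrt gt_def Ur_def Ufun_def
      by (simp only: r_eq, simp add: field_simps s0, algebra)
    have o2: "omega2 pd (?phi z) (0,gr,Ur,1) (1,gt,Ut,0) = 0"
      unfolding omega2_def zrt gt_def Ur_def Ufun_def gr_def Gp Ut_def N_def Nr_def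
      using rpos by (simp only: r_eq, simp add: field_simps s0 a2, algebra)
    show ?thesis
    proof (intro exI[of _ phi'] conjI allI hd inj)
      fix v w :: "real \<times> real"
      obtain v1 v2 where v: "v = (v1, v2)" by (cases v)
      obtain w1 w2 where w: "w = (w1, w2)" by (cases w)
      have "omega1 (?phi z) (phi' v) (phi' w) = 0 \<and> omega2 pd (?phi z) (phi' v) (phi' w) = 0"
        by (simp add: phi'_def v w omega_bilin[OF o1 o2])
      then show "omega1 (?phi z) (phi' v) (phi' w) = 0" "omega2 pd (?phi z) (phi' v) (phi' w) = 0"
        by auto
    qed
  qed
  show ?thesis unfolding multivalued_solution_def
    using I_open deriv cont by (auto simp: open_Times inj_on_def)
qed

end
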